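(* Let $\bar A=\{A_i\}$ be a partition with $A_i\in(P_i,Q_i)$ such that every $A_i$ satisfies the short cycle property, i.e. $T_iA_i\in(Q_{\rho(i)},A_{\rho(i)+1})$ and $T_{i-1}A_i\in(A_{\theta(i-1)},P_{\theta(i-1)+1})$. Put $B_i=T_{\sigma(i-1)}A_{\sigma(i-1)}$, $C_i=T_{\sigma(i+1)}A_{\sigma(i+1)+1}$ and \[ \Omega_{\bar A}=\bigcup_{i=1}^{8g-4}\Big([Q_{i+2},P_{i-1}]\times[A_i,A_{i+1}]\cup[Q_{i+1},Q_{i+2}]\times[A_i,C_i]\cup[P_{i-1},P_i]\times[B_i,A_{i+1}]\Big). \] Let $p_i,q_i,b_i,c_i$ be angular coordinates of $P_i,Q_i,B_i,C_i$ (e.g. $P_i=e^{\mathrm i p_i}$). With $d\nu=\frac{|dx|\,|dy|}{|x-y|^2}$, \[ \nu(\Omega_{\bar A})=\ln\prod_{i=1}^{8g-4}\frac{\left|\sin\frac{c_i-q_{i+2}}2\right|\,\left|\sin\frac{b_i-p_{i-1}}2\right|}{\left|\sin\frac{b_i-p_i}2\right|\,\left|\sin\frac{c_i-q_{i+1}}2\right|}. \]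
   Context: Setting. Fix $g\ge 2$; indices are mod $8g-4$. Let $\mathcal F$ be the regular hyperbolic $(8g-4)$-gon in the unit disk centered at $0$ with all interior angles $\pi/2$, sides labeled $1,\dots,8g-4$ counterclockwise, side $i$ joining vertices $V_i$ and $V_{i+1}$. The complete geodesic extending side $i$ goes from $P_i$ (beyond $V_i$) to $Q_{i+1}$ (beyond $V_{i+1}$) on the unit circle $\mathbb S$; counterclockwise order $P_1,Q_1,P_2,Q_2,\dots,P_{8g-4},Q_{8g-4}$. $\sigma(i)=4g-i$ ($i$ odd), $\sigma(i)=2-i$ ($i$ even), $\rho(i)=\sigma(i)+1$, $\theta(i)=\sigma(i)-1$. $T_i$ is the Möbius transformation mapping side $i$ onto side $\sigma(i)$, with isometric circle the geodesic $P_iQ_{i+1}$, mapped onto the geodesic $Q_{\sigma(i)+1}P_{\sigma(i)}$, inside to outside. Arcs $[A,B]$ etc. are counterclockwise from $A$ to $B$. The measure $\nu$ on $\mathbb S\times\mathbb S$ is $d\nu=|dx||dy|/|x-y|^2$, $|dx|,|dy|$ arc length. *)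

theory Defs
  imports "HOL-Analysis.Analysis" "HOL-Probability.Probability"
begin

definition NN :: "nat \<Rightarrow> int" where
  "NN g = 8 * int g - 4"

text \<open>Angular position of the (Euclidean) centre of the geodesic extending side i.
  Any common rotation of the picture gives the same statement; we fix side i centred
  at angle 2 pi i / N.\<close>
definition alpha :: "nat \<Rightarrow> int \<Rightarrow> real" where
  "alpha g i = 2 * pi * of_int i / of_int (NN g)"

text \<open>Half angular width of each side geodesic: adjacent side geodesics meet at right
  angles iff sin beta = sqrt 2 * sin (pi / N).\<close>
definition beta :: "nat \<Rightarrow> real" where
  "beta g = arcsin (sqrt 2 * sin (pi / of_int (NN g)))"

definition Pp :: "nat \<Rightarrow> int \<Rightarrow> complex" where
  "Pp g i = cis (alpha g i - beta g)"

definition Qp :: "nat \<Rightarrow> int \<Rightarrow> complex" where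
  "Qp g i = cis (alpha g (i - 1) + beta g)"

text \<open>Euclidean circle carrying the geodesic P_i Q_(i+1) (orthogonal to the unit circle).\<close>
definition side_center :: "nat \<Rightarrow> int \<Rightarrow> complex" where
  "side_center g i = complex_of_real (1 / cos (beta g)) * cis (alpha g i)"

definition side_radius :: "nat \<Rightarrow> real" where
  "side_radius g = tan (beta g)"

definition side_circle :: "nat \<Rightarrow> int \<Rightarrow> complex set" where
  "side_circle g i = sphere (side_center g i) (side_radius g)"

definition sigma :: "nat \<Rightarrow> int \<Rightarrow> int" where
  "sigma g i = (if odd i then 4 * int g - i else 2 - i)"

definition rho :: "nat \<Rightarrow> int \<Rightarrow> int" where
  "rho g i = sigma g i + 1"

definition theta :: "nat \<Rightarrow> int \<Rightarrow> int" where
  "theta g i = sigma g i - 1"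

definition mob :: "complex \<Rightarrow> complex \<Rightarrow> complex \<Rightarrow> complex" where
  "mob a b z = (a * z + b) / (cnj b * z + cnj a)"

text \<open>Isometric circle of z -> (a z + b)/(cnj b z + cnj a) with |a|^2-|b|^2 = 1, b \<noteq> 0:
  the circle where |T'(z)| = 1, i.e. |cnj b z + cnj a| = 1.\<close>
definition iso_circle :: "complex \<Rightarrow> complex \<Rightarrow> complex set" where
  "iso_circle a b = sphere (- cnj a / cnj b) (1 / cmod b)"

text \<open>T_i: the orientation preserving disk automorphism whose isometric circle is the
  geodesic P_i Q_(i+1), mapped onto the geodesic Q_(sigma i + 1) P_(sigma i).\<close>
definition T :: "nat \<Rightarrow> int \<Rightarrow> complex \<Rightarrow> complex" where
  "T g i = (THE f. \<exists>a b. (cmod a)\<^sup>2 - (cmod b)\<^sup>2 = 1 \<and> b \<noteq> 0 \<and> f = mob a b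
      \<and> iso_circle a b = side_circle g i
      \<and> f ` side_circle g i = side_circle g (sigma g i))"

definition ccw_angle :: "complex \<Rightarrow> complex \<Rightarrow> real" where
  "ccw_angle X Y = (let t = Arg (Y / X) in if t < 0 then t + 2 * pi else t)"

definition closed_arc :: "complex \<Rightarrow> complex \<Rightarrow> complex set" where
  "closed_arc X Y = {X * cis t | t. 0 \<le> t \<and> t \<le> ccw_angle X Y}"

definition open_arc :: "complex \<Rightarrow> complex \<Rightarrow> complex set" where
  "open_arc X Y = {X * cis t | t. 0 < t \<and> t < ccw_angle X Y}"

definition arc_measure :: "complex measure" where
  "arc_measure = distr (restrict_space lborel {0..<2*pi}) borel cis"

definition nu :: "(complex \<times> complex) measure" where
  "nu = density (arc_measure \<Otimes>\<^sub>M arc_measure)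
          (\<lambda>(x, y). ennreal (1 / (cmod (x - y))\<^sup>2))"

definition Bpt :: "nat \<Rightarrow> (int \<Rightarrow> complex) \<Rightarrow> int \<Rightarrow> complex" where
  "Bpt g A i = T g (sigma g (i - 1)) (A (sigma g (i - 1)))"

definition Cpt :: "nat \<Rightarrow> (int \<Rightarrow> complex) \<Rightarrow> int \<Rightarrow> complex" where
  "Cpt g A i = T g (sigma g (i + 1)) (A (sigma g (i + 1) + 1))"

definition Omega :: "nat \<Rightarrow> (int \<Rightarrow> complex) \<Rightarrow> (complex \<times> complex) set" where
  "Omega g A = (\<Union>i\<in>{1..NN g}.
      (closed_arc (Qp g (i + 2)) (Pp g (i - 1)) \<times> closed_arc (A i) (A (i + 1)))
    \<union> (closed_arc (Qp g (i + 1)) (Qp g (i + 2)) \<times> closed_arc (A i) (Cpt g A i))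
    \<union> (closed_arc (Pp g (i - 1)) (Pp g i) \<times> closed_arc (Bpt g A i) (A (i + 1))))"

end

theory Submission
  imports Defs
begin


lemma lborel_shift:
  fixes G :: "real \<Rightarrow> ennreal"
  assumes [measurable]: "G \<in> borel_measurable borel"
  shows "(\<integral>\<^sup>+t. G t \<partial>lborel) = (\<integral>\<^sup>+t. G (t + e) \<partial>lborel)"
  using nn_integral_real_affine[OF assms, of 1 e] by (simp add: add.commute)

lemma cis_borel[measurable]: "cis \<in> borel_measurable borel"
  by (intro borel_measurable_continuous_onI continuous_on_cis continuous_on_id)

lemma cis_periodic_int: "cis (t + 2*pi * of_int k) = cis t"
  by (simp add: cis.ctr complex_eq_iff sin_add cos_add)

lemma cis_2pi: "cis (t + 2*pi) = cis t"
  using cis_periodic_int[of t 1] by simp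

lemma periodic_window:
  fixes f :: "complex \<Rightarrow> ennreal"
  assumes [measurable]: "f \<in> borel_measurable borel"
  shows "(\<integral>\<^sup>+t. f (cis t) * indicator {c..<c+2*pi} t \<partial>lborel)
       = (\<integral>\<^sup>+t. f (cis t) * indicator {0..<2*pi} t \<partial>lborel)"
proof -
  define k where "k = \<lfloor>c/(2*pi)\<rfloor>"
  define d where "d = c - 2*pi * of_int k"
  have k1: "of_int k \<le> c/(2*pi)" and k2: "c/(2*pi) < of_int k + 1"
    unfolding k_def by linarith+
  have d0: "0 \<le> d" using k1 unfolding d_def by (simp add: field_simps)
  have d1: "d < 2*pi" using k2 unfolding d_def by (simp add: field_simps)
  have "(\<integral>\<^sup>+t. f (cis t) * indicator {c..<c+2*pi} t \<partial>lborel)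
      = (\<integral>\<^sup>+t. f (cis (t + 2*pi * of_int k)) * indicator {c..<c+2*pi} (t + 2*pi * of_int k) \<partial>lborel)"
    by (rule lborel_shift) measurable
  also have "\<dots> = (\<integral>\<^sup>+t. f (cis t) * indicator {d..<d+2*pi} t \<partial>lborel)"
    by (intro nn_integral_cong) (auto simp: cis_periodic_int d_def indicator_def)
  also have "\<dots> = (\<integral>\<^sup>+t. f (cis t) * indicator {d..<2*pi} t + f (cis t) * indicator {2*pi..<2*pi+d} t \<partial>lborel)"
    by (intro nn_integral_cong) (use d0 d1 in \<open>auto simp: indicator_def\<close>)
  also have "\<dots> = (\<integral>\<^sup>+t. f (cis t) * indicator {d..<2*pi} t \<partial>lborel) + (\<integral>\<^sup>+t. f (cis t) * indicator {2*pi..<2*pi+d} t \<partial>lborel)"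
    by (rule nn_integral_add) measurable
  also have "(\<integral>\<^sup>+t. f (cis t) * indicator {2*pi..<2*pi+d} t \<partial>lborel)
     = (\<integral>\<^sup>+t. f (cis (t + 2*pi)) * indicator {2*pi..<2*pi+d} (t + 2*pi) \<partial>lborel)"
    by (rule lborel_shift) measurable
  also have "\<dots> = (\<integral>\<^sup>+t. f (cis t) * indicator {0..<d} t \<partial>lborel)"
    by (intro nn_integral_cong) (auto simp: indicator_def cis_2pi)
  also have "(\<integral>\<^sup>+t. f (cis t) * indicator {d..<2*pi} t \<partial>lborel) + \<dots>
     = (\<integral>\<^sup>+t. f (cis t) * indicator {d..<2*pi} t + f (cis t) * indicator {0..<d} t \<partial>lborel)"
    by (rule nn_integral_add[symmetric]) measurable
  also have "\<dots> = (\<integral>\<^sup>+t. f (cis t) * indicator {0..<2*pi} t \<partial>lborel)"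
    by (intro nn_integral_cong) (use d0 d1 in \<open>auto simp: indicator_def\<close>)
  finally show ?thesis .
qed

lemma arc_measure_sets[simp, measurable_cong]: "sets arc_measure = sets borel"
  unfolding arc_measure_def by simp

lemma arc_measure_space[simp]: "space arc_measure = UNIV"
  unfolding arc_measure_def by simp

lemma arc_integral:
  fixes f :: "complex \<Rightarrow> ennreal"
  assumes [measurable]: "f \<in> borel_measurable borel"
  shows "(\<integral>\<^sup>+z. f z \<partial>arc_measure) = (\<integral>\<^sup>+t. f (cis t) * indicator {c..<c+2*pi} t \<partial>lborel)"
proof -
  have cm: "cis \<in> measurable (restrict_space lborel {0..<2*pi}) borel"
    by (intro measurable_restrict_space1) simp
  have "(\<integral>\<^sup>+z. f z \<partial>arc_measure) = (\<integral>\<^sup>+t. f (cis t) \<partial>restrict_space lborel {0..<2*pi})"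
    unfolding arc_measure_def by (rule nn_integral_distr[OF cm]) simp
  also have "\<dots> = (\<integral>\<^sup>+t. f (cis t) * indicator {0..<2*pi} t \<partial>lborel)"
    by (rule nn_integral_restrict_space) simp
  finally show ?thesis using periodic_window[OF assms, of c] by simp
qed




lemma cis_eq_int: assumes "cis u = cis s" shows "\<exists>m::int. u = s + 2*pi * of_int m"
proof -
  have "exp (\<i> * complex_of_real u) = exp (\<i> * complex_of_real s)"
    using assms by (simp add: cis_conv_exp)
  then obtain n :: int where n: "\<i> * complex_of_real u = \<i> * complex_of_real s + (of_int (2 * n) * pi) * \<i>"
    unfolding exp_eq by blast
  then have "\<i> * complex_of_real u = \<i> * complex_of_real (s + 2*pi * of_int n)"
    by (simp add: algebra_simps)
  then have "complex_of_real u = complex_of_real (s + 2*pi * of_int n)"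
    by (simp only: mult_cancel_left) simp
  then show ?thesis by (intro exI[of _ n]) (simp only: of_real_eq_iff)
qed

lemma ccw_angle_range: "0 \<le> ccw_angle X Y \<and> ccw_angle X Y < 2*pi"
  using Arg_bounded[of "Y/X"] unfolding ccw_angle_def Let_def by auto

lemma ccw_angle_cis: assumes "0 \<le> b - a" "b - a < 2*pi"
  shows "ccw_angle (cis a) (cis b) = b - a"
proof -
  have q: "cis b / cis a = cis (b - a)" by (simp add: cis_divide)
  show ?thesis
  proof (cases "b - a \<le> pi")
    case True
    then have "Arg (cis (b - a)) = b - a" using assms by (intro Arg_cis) auto
    then show ?thesis using assms unfolding ccw_angle_def Let_def q by simp
  next
    case False
    have c: "cis (b - a) = cis (b - a - 2*pi)" using cis_2pi[of "b-a-2*pi"] by simp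
    then have "Arg (cis (b - a)) = b - a - 2*pi" using assms False by (subst c, intro Arg_cis) auto
    then show ?thesis using assms False unfolding ccw_angle_def Let_def q by simp
  qed
qed

lemma closed_arc_cis: assumes "0 \<le> b - a" "b - a < 2*pi"
  shows "closed_arc (cis a) (cis b) = cis ` {a..b}"
proof -
  have "closed_arc (cis a) (cis b) = {cis (a + t) | t. 0 \<le> t \<and> t \<le> b - a}"
    unfolding closed_arc_def ccw_angle_cis[OF assms] by (simp add: cis_mult)
  also have "\<dots> = cis ` {a..b}"
    by (auto simp: image_def intro!: exI[of _ "x - a" for x])
  finally show ?thesis .
qed

lemma open_arc_cis: assumes "0 \<le> b - a" "b - a < 2*pi"
  shows "open_arc (cis a) (cis b) = cis ` {a<..<b}"
proof -
  have "open_arc (cis a) (cis b) = {cis (a + t) | t. 0 < t \<and> t < b - a}"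
    unfolding open_arc_def ccw_angle_cis[OF assms] by (simp add: cis_mult)
  also have "\<dots> = cis ` {a<..<b}"
    by (auto simp: image_def intro!: exI[of _ "x - a" for x])
  finally show ?thesis .
qed

lemma window_mem: assumes "a \<le> u" "u < a + 2*pi" "a \<le> b" "b < a + 2*pi"
  shows "cis u \<in> closed_arc (cis a) (cis b) \<longleftrightarrow> u \<in> {a..b}"
proof
  have ca: "closed_arc (cis a) (cis b) = cis ` {a..b}" using assms by (intro closed_arc_cis) auto
  assume "cis u \<in> closed_arc (cis a) (cis b)"
  then obtain s where s: "s \<in> {a..b}" "cis u = cis s" unfolding ca by auto
  then obtain m :: int where m: "u = s + 2*pi * of_int m" using cis_eq_int by blast
  have "m < 1"
  proof (rule ccontr)
    assume "\<not> m < 1" then have "2*pi * of_int m \<ge> 2*pi" by simp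
    then show False using m s(1) assms by (simp only: atLeastAtMost_iff) linarith
  qed
  moreover have "m > -1"
  proof (rule ccontr)
    assume "\<not> m > -1" then have "real_of_int m \<le> -1" by simp
    then have "2*pi * of_int m \<le> 2*pi*(-1)" by (intro mult_left_mono) auto
    then show False using m s(1) assms by (simp only: atLeastAtMost_iff) linarith
  qed
  ultimately have "m = 0" by simp
  then show "u \<in> {a..b}" using m s by simp
next
  have ca: "closed_arc (cis a) (cis b) = cis ` {a..b}" using assms by (intro closed_arc_cis) auto
  assume "u \<in> {a..b}" then show "cis u \<in> closed_arc (cis a) (cis b)"
    unfolding ca by auto
qed

lemma closed_arc_closed: "closed (closed_arc X Y)"
proof -
  have "closed_arc X Y = (\<lambda>t. X * cis t) ` {0..ccw_angle X Y}"
    unfolding closed_arc_def by auto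
  moreover have "compact ((\<lambda>t. X * cis t) ` {0..ccw_angle X Y})"
    by (intro compact_continuous_image continuous_intros) auto
  ultimately show ?thesis by (simp add: compact_imp_closed)
qed

lemma closed_arc_sets[measurable]: "closed_arc X Y \<in> sets borel"
  using closed_arc_closed by simp

lemma cmod_cis_diff: "(cmod (cis t - cis u))\<^sup>2 = 4 * (sin ((t - u)/2))\<^sup>2"
proof -
  have "(cmod (cis t - cis u))\<^sup>2 = (cos t - cos u)\<^sup>2 + (sin t - sin u)\<^sup>2"
    by (simp add: cmod_power2)
  also have "\<dots> = 2 - 2 * cos (t - u)"
    by (simp add: cos_diff power2_eq_square algebra_simps)
  also have "cos (t - u) = 1 - 2 * (sin ((t-u)/2))\<^sup>2"
  proof -
    have e: "2*((t-u)/2) = t - u" by simp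
    have "cos (t - u) = cos (2*((t-u)/2))" by (simp only: e)
    then show ?thesis by (simp only: cos_double_sin)
  qed
  finally show ?thesis by simp
qed




lemma arc_space_measure: "emeasure arc_measure UNIV = ennreal (2*pi)"
proof -
  have "emeasure arc_measure UNIV = (\<integral>\<^sup>+z. 1 \<partial>arc_measure)"
    by (simp add: nn_integral_const)
  also have "\<dots> = (\<integral>\<^sup>+t. 1 * indicator {0..<0+2*pi} t \<partial>lborel)"
    by (rule arc_integral) simp
  also have "\<dots> = ennreal (2*pi)" by simp
  finally show ?thesis .
qed

interpretation arc: finite_measure arc_measure
  by (rule finite_measureI) (simp add: arc_space_measure)

lemma inner_FTC:
  fixes t y1 y2 :: real
  assumes "y1 \<le> y2" and nz: "\<And>u. y1 \<le> u \<Longrightarrow> u \<le> y2 \<Longrightarrow> sin ((t-u)/2) \<noteq> 0"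
  shows "(\<integral>\<^sup>+u. ennreal (1/(4*(sin((t-u)/2))\<^sup>2)) * indicator {y1..y2} u \<partial>lborel)
           = ennreal (cot((t-y2)/2)/2 - cot((t-y1)/2)/2)"
    and "0 \<le> cot((t-y2)/2)/2 - cot((t-y1)/2)/2"
proof -
  have d: "((\<lambda>u. cot((t-u)/2)/2) has_vector_derivative (1/(4*(sin((t-u)/2))\<^sup>2))) (at u within {y1..y2})"
    if "u \<in> {y1..y2}" for u
  proof -
    have s: "sin ((t-u)/2) \<noteq> 0" using nz that by auto
    have "((\<lambda>u. cot((t-u)/2)/2) has_real_derivative (1/(4*(sin((t-u)/2))\<^sup>2))) (at u)"
      unfolding cot_def using s
      by (auto intro!: derivative_eq_intros simp: field_simps power2_eq_square)
    then show ?thesis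
      by (simp add: has_real_derivative_iff_has_vector_derivative has_vector_derivative_at_within)
  qed
  have I: "((\<lambda>u. 1/(4*(sin((t-u)/2))\<^sup>2)) has_integral (cot((t-y2)/2)/2 - cot((t-y1)/2)/2)) {y1..y2}"
    using fundamental_theorem_of_calculus[OF assms(1) d] by simp
  show "(\<integral>\<^sup>+u. ennreal (1/(4*(sin((t-u)/2))\<^sup>2)) * indicator {y1..y2} u \<partial>lborel)
           = ennreal (cot((t-y2)/2)/2 - cot((t-y1)/2)/2)"
    by (rule nn_integral_has_integral_lebesgue'[OF _ I]) simp
  show "0 \<le> cot((t-y2)/2)/2 - cot((t-y1)/2)/2"
    by (rule has_integral_nonneg[OF I]) simp
qed

lemma outer_FTC:
  fixes x1 x2 y1 y2 :: real
  assumes "x1 \<le> x2" and pos: "\<And>t y. x1 \<le> t \<Longrightarrow> t \<le> x2 \<Longrightarrow> (y = y1 \<or> y = y2) \<Longrightarrow> sin ((t-y)/2) > 0"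
    and nn: "\<And>t. x1 \<le> t \<Longrightarrow> t \<le> x2 \<Longrightarrow> 0 \<le> cot((t-y2)/2)/2 - cot((t-y1)/2)/2"
  shows "(\<integral>\<^sup>+t. ennreal (cot((t-y2)/2)/2 - cot((t-y1)/2)/2) * indicator {x1..x2} t \<partial>lborel)
           = ennreal ((ln (sin ((x2-y2)/2)) - ln (sin ((x2-y1)/2))) - (ln (sin ((x1-y2)/2)) - ln (sin ((x1-y1)/2))))"
    and "0 \<le> (ln (sin ((x2-y2)/2)) - ln (sin ((x2-y1)/2))) - (ln (sin ((x1-y2)/2)) - ln (sin ((x1-y1)/2)))"
proof -
  have d: "((\<lambda>t. ln (sin ((t-y2)/2)) - ln (sin ((t-y1)/2))) has_vector_derivative (cot((t-y2)/2)/2 - cot((t-y1)/2)/2)) (at t within {x1..x2})"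
    if "t \<in> {x1..x2}" for t
  proof -
    have s1: "sin ((t-y1)/2) > 0" and s2: "sin ((t-y2)/2) > 0" using pos that by auto
    have "((\<lambda>t. ln (sin ((t-y2)/2)) - ln (sin ((t-y1)/2))) has_real_derivative (cot((t-y2)/2)/2 - cot((t-y1)/2)/2)) (at t)"
      unfolding cot_def using s1 s2
      by (auto intro!: derivative_eq_intros simp: field_simps)
    then show ?thesis
      by (simp add: has_real_derivative_iff_has_vector_derivative has_vector_derivative_at_within)
  qed
  have I: "((\<lambda>t. cot((t-y2)/2)/2 - cot((t-y1)/2)/2) has_integral ((ln (sin ((x2-y2)/2)) - ln (sin ((x2-y1)/2))) - (ln (sin ((x1-y2)/2)) - ln (sin ((x1-y1)/2))))) {x1..x2}"
    using fundamental_theorem_of_calculus[OF assms(1) d] by simp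
  show "(\<integral>\<^sup>+t. ennreal (cot((t-y2)/2)/2 - cot((t-y1)/2)/2) * indicator {x1..x2} t \<partial>lborel)
           = ennreal ((ln (sin ((x2-y2)/2)) - ln (sin ((x2-y1)/2))) - (ln (sin ((x1-y2)/2)) - ln (sin ((x1-y1)/2))))"
    by (rule nn_integral_has_integral_lebesgue'[OF _ I]) (use nn in auto)
  show "0 \<le> (ln (sin ((x2-y2)/2)) - ln (sin ((x2-y1)/2))) - (ln (sin ((x1-y2)/2)) - ln (sin ((x1-y1)/2)))"
    by (rule has_integral_nonneg[OF I]) (use nn in auto)
qed




definition Lr :: "real \<Rightarrow> real \<Rightarrow> real \<Rightarrow> real \<Rightarrow> real" where
  "Lr x1 x2 y1 y2 = (ln (sin ((x2-y2)/2)) - ln (sin ((x2-y1)/2))) - (ln (sin ((x1-y2)/2)) - ln (sin ((x1-y1)/2)))"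

lemma w_meas[measurable]: "(\<lambda>(x::complex, y). ennreal (1 / (cmod (x - y))\<^sup>2)) \<in> borel_measurable (arc_measure \<Otimes>\<^sub>M arc_measure)"
  by measurable

lemma rect:
  assumes "y1 \<le> y2" "y2 < x1" "x1 \<le> x2" "x2 < y1 + 2*pi"
  shows "emeasure nu (closed_arc (cis x1) (cis x2) \<times> closed_arc (cis y1) (cis y2)) = ennreal (Lr x1 x2 y1 y2)"
    and "0 \<le> Lr x1 x2 y1 y2"
proof -
  define S1 where "S1 = closed_arc (cis x1) (cis x2)"
  define S2 where "S2 = closed_arc (cis y1) (cis y2)"
  define w where "w = (\<lambda>(x::complex, y). ennreal (1 / (cmod (x - y))\<^sup>2))"
  have [measurable]: "S1 \<in> sets borel" "S2 \<in> sets borel" unfolding S1_def S2_def by simp_all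
  have wm[measurable]: "w \<in> borel_measurable (arc_measure \<Otimes>\<^sub>M arc_measure)" unfolding w_def by simp
  have sinpos: "sin ((t-u)/2) > 0" if "x1 \<le> t" "t \<le> x2" "y1 \<le> u" "u \<le> y2" for t u
    using that assms by (intro sin_gt_zero) auto
  define G where "G t = cot((t-y2)/2)/2 - cot((t-y1)/2)/2" for t
  have J: "(\<integral>\<^sup>+y. w (cis t, y) * indicator S2 y \<partial>arc_measure) = ennreal (G t)"
     and Gnn: "0 \<le> G t"
    if t: "x1 \<le> t" "t \<le> x2" for t
  proof -
    have "(\<integral>\<^sup>+y. w (cis t, y) * indicator S2 y \<partial>arc_measure)
       = (\<integral>\<^sup>+u. w (cis t, cis u) * indicator S2 (cis u) * indicator {y1..<y1+2*pi} u \<partial>lborel)"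
      by (rule arc_integral) (simp add: w_def)
    also have "\<dots> = (\<integral>\<^sup>+u. ennreal (1/(4*(sin((t-u)/2))\<^sup>2)) * indicator {y1..y2} u \<partial>lborel)"
    proof (intro nn_integral_cong)
      fix u
      show "w (cis t, cis u) * indicator S2 (cis u) * indicator {y1..<y1+2*pi} u
          = ennreal (1/(4*(sin((t-u)/2))\<^sup>2)) * indicator {y1..y2} u"
      proof (cases "y1 \<le> u \<and> u < y1 + 2*pi")
        case True
        then have "cis u \<in> S2 \<longleftrightarrow> u \<in> {y1..y2}" unfolding S2_def
          using assms by (intro window_mem) auto
        then show ?thesis using True by (auto simp: w_def cmod_cis_diff indicator_def)
      next
        case False
        then show ?thesis using assms by (auto simp: indicator_def)
      qed
    qed
    also have "\<dots> = ennreal (G t)" unfolding G_def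
      using sinpos t assms by (intro inner_FTC(1)) force+
    finally show "(\<integral>\<^sup>+y. w (cis t, y) * indicator S2 y \<partial>arc_measure) = ennreal (G t)" .
    show "0 \<le> G t" unfolding G_def
      using sinpos t assms by (intro inner_FTC(2)) force+
  qed
  have "emeasure nu (S1 \<times> S2) = (\<integral>\<^sup>+p. w p * indicator (S1 \<times> S2) p \<partial>(arc_measure \<Otimes>\<^sub>M arc_measure))"
    unfolding nu_def w_def by (rule emeasure_density) measurable
  also have "\<dots> = (\<integral>\<^sup>+x. \<integral>\<^sup>+y. w (x,y) * indicator (S1 \<times> S2) (x,y) \<partial>arc_measure \<partial>arc_measure)"
    by (rule arc.nn_integral_fst[symmetric]) measurable
  also have "\<dots> = (\<integral>\<^sup>+x. indicator S1 x * (\<integral>\<^sup>+y. w (x,y) * indicator S2 y \<partial>arc_measure) \<partial>arc_measure)"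
    by (intro nn_integral_cong) (auto simp: indicator_def)
  also have "\<dots> = (\<integral>\<^sup>+t. indicator S1 (cis t) * (\<integral>\<^sup>+y. w (cis t,y) * indicator S2 y \<partial>arc_measure) * indicator {x1..<x1+2*pi} t \<partial>lborel)"
    by (rule arc_integral) measurable
  also have "\<dots> = (\<integral>\<^sup>+t. ennreal (G t) * indicator {x1..x2} t \<partial>lborel)"
  proof (intro nn_integral_cong)
    fix t
    show "indicator S1 (cis t) * (\<integral>\<^sup>+y. w (cis t,y) * indicator S2 y \<partial>arc_measure) * indicator {x1..<x1+2*pi} t
        = ennreal (G t) * indicator {x1..x2} t"
    proof (cases "x1 \<le> t \<and> t < x1 + 2*pi")
      case True
      then have m: "cis t \<in> S1 \<longleftrightarrow> t \<in> {x1..x2}" unfolding S1_def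
        using assms by (intro window_mem) auto
      show ?thesis
      proof (cases "t \<in> {x1..x2}")
        case True2: True
        then show ?thesis using m True J[of t] by (auto simp: indicator_def)
      next
        case False
        then show ?thesis using m True by (auto simp: indicator_def)
      qed
    next
      case False
      then show ?thesis using assms by (auto simp: indicator_def)
    qed
  qed
  also have "\<dots> = ennreal (Lr x1 x2 y1 y2)" unfolding G_def Lr_def
    using sinpos assms Gnn unfolding G_def by (intro outer_FTC(1)) force+
  finally show "emeasure nu (closed_arc (cis x1) (cis x2) \<times> closed_arc (cis y1) (cis y2)) = ennreal (Lr x1 x2 y1 y2)"
    unfolding S1_def S2_def .
  show "0 \<le> Lr x1 x2 y1 y2" unfolding Lr_def
    using sinpos assms Gnn unfolding G_def by (intro outer_FTC(2)) force+
qed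




definition hh :: "nat \<Rightarrow> real" where "hh g = 2*pi / of_int (NN g)"
definition pa :: "nat \<Rightarrow> int \<Rightarrow> real" where "pa g k = of_int k * hh g - beta g"
definition qa :: "nat \<Rightarrow> int \<Rightarrow> real" where "qa g k = (of_int k - 1) * hh g + beta g"

lemma Pp_cis: "Pp g k = cis (pa g k)"
  unfolding Pp_def pa_def alpha_def hh_def by (simp add: field_simps)

lemma Qp_cis: "Qp g k = cis (qa g k)"
  unfolding Qp_def qa_def alpha_def hh_def by (simp add: field_simps)

lemma pa_shift: "pa g (k + m) = pa g k + of_int m * hh g"
  unfolding pa_def by (simp add: algebra_simps)
lemma qa_shift: "qa g (k + m) = qa g k + of_int m * hh g"
  unfolding qa_def by (simp add: algebra_simps)
lemma pa_minus: "pa g (k - m) = pa g k - of_int m * hh g"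
  unfolding pa_def by (simp add: algebra_simps)
lemma qa_minus: "qa g (k - m) = qa g k - of_int m * hh g"
  unfolding qa_def by (simp add: algebra_simps)
lemma qa_pa: "qa g k = pa g k - hh g + 2 * beta g"
  unfolding qa_def pa_def by (simp add: algebra_simps)

lemma NN_ge: "g \<ge> 2 \<Longrightarrow> NN g \<ge> 12"
  unfolding NN_def by simp

lemma NN_hh: "g \<ge> 2 \<Longrightarrow> of_int (NN g) * hh g = 2*pi"
  using NN_ge[of g] unfolding hh_def by simp

lemma hh_bounds: assumes "g \<ge> 2" shows "0 < hh g" "hh g \<le> pi/6"
proof -
  have N: "real_of_int (NN g) \<ge> 12" using NN_ge[OF assms] by linarith
  show "0 < hh g" unfolding hh_def using N by simp
  have "2*pi / real_of_int (NN g) \<le> 2*pi/12"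
    using N by (intro divide_left_mono) auto
  then show "hh g \<le> pi/6" unfolding hh_def by simp
qed

lemma beta_bounds: assumes "g \<ge> 2" shows "hh g / 2 < beta g" "beta g < hh g"
proof -
  define x where "x = pi / of_int (NN g)"
  have hx: "hh g = 2 * x" unfolding x_def hh_def by simp
  have x0: "0 < x" and x1: "x \<le> pi/12" using hh_bounds[OF assms] hx by auto
  have sx: "0 < sin x" using x0 x1 by (intro sin_gt_zero) auto
  have cx: "cos x > sqrt 2 / 2"
    using cos_monotone_0_pi[of x "pi/4"] x0 x1 cos_45 by auto
  have b: "beta g = arcsin (sqrt 2 * sin x)" unfolding beta_def x_def by simp
  have s2: "sqrt 2 * sin x < sin (2*x)"
  proof -
    have "sqrt 2 * sin x = 2 * (sqrt 2 / 2) * sin x" by simp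
    also have "\<dots> < 2 * cos x * sin x" using cx sx by (intro mult_strict_right_mono) auto
    finally have "sqrt 2 * sin x < 2 * cos x * sin x" .
    moreover have "sin (2*x) = 2 * cos x * sin x" by (simp add: sin_double)
    ultimately show ?thesis by linarith
  qed
  have s1: "sin x < sqrt 2 * sin x"
  proof -
    have "1 < sqrt 2" by simp
    then show ?thesis using sx by simp
  qed
  have "arcsin (sqrt 2 * sin x) < arcsin (sin (2*x))"
    using s2 sx by (intro arcsin_less_arcsin) (auto intro: order_trans[of _ 0] simp: sin_le_one)
  also have "arcsin (sin (2*x)) = 2*x" using x0 x1 by (intro arcsin_sin) auto
  finally show "beta g < hh g" using b hx by simp
  have "arcsin (sin x) < arcsin (sqrt 2 * sin x)"
  proof -
    have o: "sqrt 2 * sin x \<le> 1" using s2 sin_le_one[of "2*x"] by linarith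
    show ?thesis using s1 o sx by (intro arcsin_less_arcsin) auto
  qed
  also have "arcsin (sin x) = x" using x0 x1 by (intro arcsin_sin) auto
  finally show "hh g / 2 < beta g" using b hx by simp
qed




lemma sigma_inv: "sigma g (sigma g i) = i"
  unfolding sigma_def by auto

lemma periodic_int:
  fixes f :: "int \<Rightarrow> 'a"
  assumes "\<forall>i. f (i + n) = f i"
  shows "f (k + m * n) = f k"
proof -
  have pos: "f (k + int j * n) = f k" for j k
    by (induction j) (simp_all add: algebra_simps assms[rule_format, of "k + int _ * n", simplified algebra_simps])
  show ?thesis
  proof (cases "m \<ge> 0")
    case True then show ?thesis using pos[of k "nat m"] by simp
  next
    case False
    have "f (k + m * n + int (nat (-m)) * n) = f (k + m * n)" by (rule pos)
    moreover have "k + m * n + int (nat (-m)) * n = k" using False by (simp add: algebra_simps)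
    ultimately show ?thesis by metis
  qed
qed

locale PS =
  fixes g :: nat and A :: "int \<Rightarrow> complex"
  assumes g2: "g \<ge> 2"
    and Aper: "\<forall>i. A (i + NN g) = A i"
    and Aarc: "\<forall>i. A i \<in> open_arc (Pp g i) (Qp g i)"
    and h4: "\<forall>i. T g i (A i) \<in> open_arc (Qp g (rho g i)) (A (rho g i + 1))"
    and h5: "\<forall>i. T g (i - 1) (A i) \<in> open_arc (A (theta g (i - 1))) (Pp g (theta g (i - 1) + 1))"
begin

lemma hb: "0 < hh g" "hh g \<le> pi/6" "hh g / 2 < beta g" "beta g < hh g"
  using hh_bounds[OF g2] beta_bounds[OF g2] by auto

lemma Npos: "NN g > 0" using NN_ge[OF g2] by simp

lemma Nh: "of_int (NN g) * hh g = 2*pi" using NN_hh[OF g2] .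

lemma pa_shiftN: "pa g (k + m * NN g) = pa g k + 2*pi * of_int m"
  using Nh by (simp add: pa_shift algebra_simps)
lemma qa_shiftN: "qa g (k + m * NN g) = qa g k + 2*pi * of_int m"
  using Nh by (simp add: qa_shift algebra_simps)

lemma A_ex: "\<exists>s. s \<in> {pa g k<..<qa g k} \<and> A k = cis s"
proof -
  have "open_arc (Pp g k) (Qp g k) = cis ` {pa g k<..<qa g k}"
    unfolding Pp_cis Qp_cis using hb by (intro open_arc_cis) (auto simp: qa_pa)
  then have "A k \<in> cis ` {pa g k<..<qa g k}" using Aarc by metis
  then show ?thesis by auto
qed

definition a0 :: "int \<Rightarrow> real" where
  "a0 k = (SOME s. s \<in> {pa g k<..<qa g k} \<and> A k = cis s)"

definition a :: "int \<Rightarrow> real" where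
  "a k = a0 (k mod NN g) + 2*pi * of_int (k div NN g)"

lemma a0: "a0 k \<in> {pa g k<..<qa g k}" "A k = cis (a0 k)"
  using someI_ex[OF A_ex[of k]] unfolding a0_def by auto

lemma a_prop: "pa g k < a k" "a k < qa g k" "A k = cis (a k)"
proof -
  have k: "k = k mod NN g + (k div NN g) * NN g" by simp
  have "pa g k = pa g (k mod NN g) + 2*pi * of_int (k div NN g)"
    by (subst k, rule pa_shiftN)
  moreover have "qa g k = qa g (k mod NN g) + 2*pi * of_int (k div NN g)"
    by (subst k, rule qa_shiftN)
  moreover have "A k = A (k mod NN g)"
    by (subst k, rule periodic_int[OF Aper])
  ultimately show "pa g k < a k" "a k < qa g k" "A k = cis (a k)"
    using a0[of "k mod NN g"] unfolding a_def by (auto simp: cis_periodic_int)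
qed

lemma a_shift: "a (k + m * NN g) = a k + 2*pi * of_int m"
proof -
  have "(k + m * NN g) mod NN g = k mod NN g" by simp
  moreover have "(k + m * NN g) div NN g = k div NN g + m" using Npos by simp
  ultimately show ?thesis unfolding a_def by (simp add: algebra_simps)
qed

lemma B_in: "Bpt g A i \<in> open_arc (Qp g i) (A (i + 1))"
  using h4[rule_format, of "sigma g (i - 1)"] unfolding Bpt_def rho_def sigma_inv by simp

lemma C_in: "Cpt g A i \<in> open_arc (A i) (Pp g (i + 1))"
  using h5[rule_format, of "sigma g (i + 1) + 1"] unfolding Cpt_def theta_def by (simp add: sigma_inv)

lemma B_ex: "\<exists>s. s \<in> {qa g i<..<a (i+1)} \<and> Bpt g A i = cis s"
proof -
  have "open_arc (Qp g i) (A (i+1)) = cis ` {qa g i<..<a (i+1)}"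
    unfolding Qp_cis a_prop(3)[of "i+1"]
    using hb a_prop(1,2)[of "i+1"] by (intro open_arc_cis) (auto simp: qa_pa pa_shift)
  then have "Bpt g A i \<in> cis ` {qa g i<..<a (i+1)}" using B_in by metis
  then show ?thesis by auto
qed

lemma C_ex: "\<exists>s. s \<in> {a i<..<pa g (i+1)} \<and> Cpt g A i = cis s"
proof -
  have "open_arc (A i) (Pp g (i+1)) = cis ` {a i<..<pa g (i+1)}"
    unfolding Pp_cis a_prop(3)[of "i"]
    using hb a_prop(1,2)[of "i"] by (intro open_arc_cis) (auto simp: qa_pa pa_shift)
  then have "Cpt g A i \<in> cis ` {a i<..<pa g (i+1)}" using C_in by metis
  then show ?thesis by auto
qed

definition b :: "int \<Rightarrow> real" where "b i = (SOME s. s \<in> {qa g i<..<a (i+1)} \<and> Bpt g A i = cis s)"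
definition c :: "int \<Rightarrow> real" where "c i = (SOME s. s \<in> {a i<..<pa g (i+1)} \<and> Cpt g A i = cis s)"

lemma b_prop: "qa g i < b i" "b i < a (i+1)" "Bpt g A i = cis (b i)"
  using someI_ex[OF B_ex[of i]] unfolding b_def by auto

lemma c_prop: "a i < c i" "c i < pa g (i+1)" "Cpt g A i = cis (c i)"
  using someI_ex[OF C_ex[of i]] unfolding c_def by auto

end



lemma abs_sin_shift: "\<bar>sin (t + of_int k * pi)\<bar> = \<bar>sin t\<bar>"
proof -
  have s: "sin (of_int k * pi) = 0" using sin_times_pi_eq_0[of "of_int k"] by simp
  have "(cos (of_int k * pi))\<^sup>2 = 1" using sin_cos_squared_add[of "of_int k * pi"] s by simp
  then have "cos (of_int k * pi) = 1 \<or> cos (of_int k * pi) = -1" by (simp add: power2_eq_1_iff)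
  then have "\<bar>cos (of_int k * pi)\<bar> = 1" by auto
  then show ?thesis by (simp add: sin_add s abs_mult)
qed

lemma Arg_cis_rep: assumes "cis x = X" shows "\<exists>m::int. Arg X = x + 2*pi * of_int m"
proof -
  have "X \<noteq> 0" using assms by auto
  then have "cis (Arg X) = sgn X" by (rule cis_Arg)
  also have "sgn X = X" using assms by (auto simp: sgn_div_norm)
  finally have "cis (Arg X) = cis x" using assms by simp
  then show ?thesis by (rule cis_eq_int)
qed

lemma abs_sin_Arg: assumes "cis x = X" "cis y = Y"
  shows "\<bar>sin ((Arg X - Arg Y)/2)\<bar> = \<bar>sin ((y - x)/2)\<bar>"
proof -
  obtain m n :: int where m: "Arg X = x + 2*pi * of_int m" and n: "Arg Y = y + 2*pi * of_int n"
    using Arg_cis_rep[OF assms(1)] Arg_cis_rep[OF assms(2)] by metis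
  have "(Arg X - Arg Y)/2 = (x - y)/2 + of_int (m - n) * pi" using m n by (simp add: field_simps)
  then have "\<bar>sin ((Arg X - Arg Y)/2)\<bar> = \<bar>sin ((x - y)/2)\<bar>" by (simp only: abs_sin_shift)
  also have "(x - y)/2 = - ((y - x)/2)" by (simp add: field_simps)
  finally show ?thesis by (simp only: sin_minus abs_minus_cancel)
qed

context PS begin

definition X1 :: "int \<Rightarrow> nat \<Rightarrow> real" where
  "X1 i k = (if k = 1 then qa g (i+2) else if k = 2 then qa g (i+1) else pa g (i-1) + 2*pi)"
definition X2 :: "int \<Rightarrow> nat \<Rightarrow> real" where
  "X2 i k = (if k = 1 then pa g (i-1) + 2*pi else if k = 2 then qa g (i+2) else pa g i + 2*pi)"
definition Y1 :: "int \<Rightarrow> nat \<Rightarrow> real" where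
  "Y1 i k = (if k = 1 then a i else if k = 2 then a i else b i)"
definition Y2 :: "int \<Rightarrow> nat \<Rightarrow> real" where
  "Y2 i k = (if k = 1 then a (i+1) else if k = 2 then c i else a (i+1))"

definition R :: "int \<Rightarrow> nat \<Rightarrow> (complex \<times> complex) set" where
  "R i k = closed_arc (cis (X1 i k)) (cis (X2 i k)) \<times> closed_arc (cis (Y1 i k)) (cis (Y2 i k))"

lemma basic_ineqs:
  "pa g i < a i" "a i < qa g i" "pa g (i+1) < a (i+1)" "a (i+1) < qa g (i+1)"
  "qa g i < b i" "b i < a (i+1)" "a i < c i" "c i < pa g (i+1)"
  using a_prop[of i] a_prop[of "i+1"] b_prop[of i] c_prop[of i] by auto

lemma pq_rel: "pa g (i+1) = pa g i + hh g" "qa g (i+1) = pa g i + 2 * beta g"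
   "qa g (i+2) = pa g i + hh g + 2 * beta g" "pa g (i-1) = pa g i - hh g" "qa g i = pa g i - hh g + 2 * beta g"
  unfolding pa_def qa_def by (simp_all add: algebra_simps)

lemma conds_all: assumes "k \<in> {1,2,3}"
  shows "Y1 i k \<le> Y2 i k \<and> Y2 i k < X1 i k \<and> X1 i k \<le> X2 i k \<and> X2 i k < Y1 i k + 2*pi \<and>
    a i \<le> Y1 i k \<and> Y2 i k \<le> a (i+1) \<and> qa g (i+1) \<le> X1 i k \<and> X2 i k \<le> pa g i + 2*pi"
proof -
  note f = basic_ineqs[of i, unfolded pq_rel] hb pq_rel
  consider "k = 1" | "k = 2" | "k = 3" using assms by auto
  then show ?thesis
    using f by (cases; simp add: X1_def X2_def Y1_def Y2_def pq_rel; linarith)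
qed

lemma conds: assumes "k \<in> {1,2,3}"
  shows "Y1 i k \<le> Y2 i k" "Y2 i k < X1 i k" "X1 i k \<le> X2 i k" "X2 i k < Y1 i k + 2*pi"
    "a i \<le> Y1 i k" "Y2 i k \<le> a (i+1)" "qa g (i+1) \<le> X1 i k" "X2 i k \<le> pa g i + 2*pi"
  using conds_all[OF assms, of i] by auto

lemma sin_pos: assumes "k \<in> {1,2,3}" "x = X1 i k \<or> x = X2 i k" "y = Y1 i k \<or> y = Y2 i k"
  shows "0 < sin ((x - y)/2)"
  using conds[OF assms(1), of i] assms(2,3) by (intro sin_gt_zero) auto

lemma R_measure: assumes "k \<in> {1,2,3}"
  shows "emeasure nu (R i k) = ennreal (Lr (X1 i k) (X2 i k) (Y1 i k) (Y2 i k))"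
    "0 \<le> Lr (X1 i k) (X2 i k) (Y1 i k) (Y2 i k)"
  unfolding R_def using conds[OF assms, of i] by (intro rect; simp)+

lemma Omega_eq: "Omega g A = (\<Union>(i,k)\<in>{1..NN g} \<times> {1,2,3}. R i k)"
proof -
  have e: "closed_arc (Qp g (i + 2)) (Pp g (i - 1)) \<times> closed_arc (A i) (A (i + 1)) = R i 1"
          "closed_arc (Qp g (i + 1)) (Qp g (i + 2)) \<times> closed_arc (A i) (Cpt g A i) = R i 2"
          "closed_arc (Pp g (i - 1)) (Pp g i) \<times> closed_arc (Bpt g A i) (A (i + 1)) = R i 3" for i
    unfolding R_def X1_def X2_def Y1_def Y2_def Pp_cis Qp_cis a_prop(3)[of i] a_prop(3)[of "i+1"]
      b_prop(3) c_prop(3) by (simp_all add: cis_2pi)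
  show ?thesis unfolding Omega_def e by auto
qed

lemma Y_arc: assumes "k \<in> {1,2,3}" shows "closed_arc (cis (Y1 i k)) (cis (Y2 i k)) = cis ` {Y1 i k..Y2 i k}"
  using conds[OF assms, of i] by (intro closed_arc_cis) auto

lemma X_arc: assumes "k \<in> {1,2,3}" shows "closed_arc (cis (X1 i k)) (cis (X2 i k)) = cis ` {X1 i k..X2 i k}"
  using conds[OF assms, of i] by (intro closed_arc_cis) auto

lemma a_mono: assumes "k < l" shows "a (k+1) \<le> a l"
proof (cases "l = k + 1")
  case True then show ?thesis by simp
next
  case False
  then have "l \<ge> k + 2" using assms by simp
  then have "of_int (k+2) * hh g \<le> of_int l * hh g" using hb by (intro mult_right_mono) auto
  then show ?thesis using a_prop(2)[of "k+1"] a_prop(1)[of l] hb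
    by (simp add: pa_def qa_def algebra_simps)
qed

lemma a_between: assumes "a i < s" "s < a (i+1)" "a k \<le> s" "s \<le> a (k+1)" shows "k = i"
proof (rule ccontr)
  assume "k \<noteq> i"
  then consider "k > i" | "k < i" by linarith
  then show False
  proof cases
    case 1 then show False using a_mono[of i k] assms by simp
  next
    case 2 then show False using a_mono[of k i] assms by simp
  qed
qed

definition Z :: "(complex \<times> complex) set" where
  "Z = ((range (Pp g) \<union> range (Qp g)) \<times> UNIV) \<union> (UNIV \<times> range A)"

lemma disj: assumes "(i,k) \<in> {1..NN g} \<times> {1,2,3}" "(j,l) \<in> {1..NN g} \<times> {1,2,3}" "(i,k) \<noteq> (j,l)"
  shows "(R i k - Z) \<inter> (R j l - Z) = {}"
proof (rule ccontr)
  assume "(R i k - Z) \<inter> (R j l - Z) \<noteq> {}"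
  then obtain x y where xy: "(x,y) \<in> R i k" "(x,y) \<in> R j l" "(x,y) \<notin> Z" by auto
  have k: "k \<in> {1,2,3}" and l: "l \<in> {1,2,3}" using assms by auto
  show False
  proof (cases "i = j")
    case False
    obtain s where s: "s \<in> {Y1 i k..Y2 i k}" "y = cis s"
      using xy(1) unfolding R_def Y_arc[OF k] by auto
    obtain s' where s': "s' \<in> {Y1 j l..Y2 j l}" "y = cis s'"
      using xy(2) unfolding R_def Y_arc[OF l] by auto
    have sa: "a i \<le> s" "s \<le> a (i+1)" using s(1) conds[OF k, of i] by auto
    have sa': "a j \<le> s'" "s' \<le> a (j+1)" using s'(1) conds[OF l, of j] by auto
    have yA: "y \<notin> range A" using xy(3) unfolding Z_def by auto
    have "s \<noteq> a i" using yA s(2) a_prop(3)[of i] by (metis rangeI)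
    moreover have "s \<noteq> a (i+1)" using yA s(2) a_prop(3)[of "i+1"] by (metis rangeI)
    ultimately have so: "a i < s" "s < a (i+1)" using sa by auto
    obtain m :: int where m: "s' = s + 2*pi * of_int m" using cis_eq_int s s' by metis
    have e1: "a j = a (j - m * NN g) + 2*pi * of_int m" using a_shift[of "j - m * NN g" m] by simp
    have e2: "a (j+1) = a (j - m * NN g + 1) + 2*pi * of_int m" using a_shift[of "j - m * NN g + 1" m] by (simp add: algebra_simps)
    have "j - m * NN g = i"
      by (rule a_between[OF so]) (use sa' m e1 e2 in linarith)+
    moreover have "m = 0"
    proof (rule ccontr)
      assume "m \<noteq> 0"
      then consider "m \<ge> 1" | "m \<le> -1" by linarith
      then show False
      proof cases
        case 1 then have "m * NN g \<ge> 1 * NN g" using Npos by (intro mult_right_mono) auto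
        then show False using \<open>j - m * NN g = i\<close> assms by auto
      next
        case 2 then have "m * NN g \<le> (-1) * NN g" using Npos by (intro mult_right_mono) auto
        then show False using \<open>j - m * NN g = i\<close> assms by auto
      qed
    qed
    ultimately show False using False by simp
  next
    case True
    then have kl: "k \<noteq> l" using assms by auto
    obtain r where r: "r \<in> {X1 i k..X2 i k}" "x = cis r"
      using xy(1) unfolding R_def X_arc[OF k] by auto
    obtain r' where r': "r' \<in> {X1 i l..X2 i l}" "x = cis r'"
      using xy(2) True unfolding R_def X_arc[OF l] by auto
    have rw: "qa g (i+1) \<le> r" "r \<le> pa g i + 2*pi" using r(1) conds[OF k, of i] by auto
    have rw': "qa g (i+1) \<le> r'" "r' \<le> pa g i + 2*pi" using r'(1) conds[OF l, of i] by auto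
    have w: "pa g i + 2*pi - qa g (i+1) < 2*pi" using hb pq_rel(2)[of i] by linarith
    obtain m :: int where m: "r' = r + 2*pi * of_int m" using cis_eq_int r r' by metis
    have "m = 0"
    proof (rule ccontr)
      assume "m \<noteq> 0"
      then consider "m \<ge> 1" | "m \<le> -1" by linarith
      then show False
      proof cases
        case 1 then have "2*pi * of_int m \<ge> 2*pi" by simp
        then show False using m rw rw' w by linarith
      next
        case 2 then have "real_of_int m \<le> -1" by simp
        then have "2*pi * of_int m \<le> 2*pi*(-1)" by (intro mult_left_mono) auto
        then show False using m rw rw' w by linarith
      qed
    qed
    then have rr: "r' = r" using m by simp
    have xPQ: "x \<notin> range (Pp g)" "x \<notin> range (Qp g)" using xy(3) unfolding Z_def by auto
    have n1: "r \<noteq> qa g (i+2)" using xPQ r(2) Qp_cis[of g "i+2"] by (metis rangeI)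
    have n2: "r \<noteq> pa g (i-1) + 2*pi" using xPQ r(2) Pp_cis[of g "i-1"] cis_2pi[of "pa g (i-1)"] by (metis rangeI)
    have gap: "qa g (i+2) < pa g (i-1) + 2*pi" using hb pq_rel[of i] by linarith
    have q1: "qa g (i+1) < qa g (i+2)" using hb pq_rel[of i] by linarith
    have q2: "pa g (i-1) < pa g i" using hb pq_rel[of i] by linarith
    consider "k = 1" | "k = 2" | "k = 3" using k by auto
    then show False
    proof cases
      case 1
      then consider "l = 2" | "l = 3" using l kl by auto
      then show False
        by cases (use r(1) r'(1) rr n1 n2 gap q1 q2 1 in \<open>simp add: X1_def X2_def; linarith\<close>)+
    next
      case 2
      then consider "l = 1" | "l = 3" using l kl by auto
      then show False
        by cases (use r(1) r'(1) rr n1 n2 gap q1 q2 2 in \<open>simp add: X1_def X2_def; linarith\<close>)+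
    next
      case 3
      then consider "l = 1" | "l = 2" using l kl by auto
      then show False
        by cases (use r(1) r'(1) rr n1 n2 gap q1 q2 3 in \<open>simp add: X1_def X2_def; linarith\<close>)+
    qed
  qed
qed

end



lemma arc_singleton_null: "emeasure arc_measure {p} = 0"
proof -
  define C where "C = {t. cis t = p}"
  have cnt: "countable C"
  proof (cases "C = {}")
    case False
    then obtain t0 where t0: "cis t0 = p" unfolding C_def by auto
    have "C \<subseteq> range (\<lambda>m::int. t0 + 2*pi * of_int m)"
      unfolding C_def using cis_eq_int t0 by fastforce
    then show ?thesis by (rule countable_subset) simp
  qed simp
  have AE: "AE t in lborel. t \<notin> C" by (rule AE_not_in[OF countable_imp_null_set_lborel[OF cnt]])
  have "emeasure arc_measure {p} = (\<integral>\<^sup>+z. indicator {p} z \<partial>arc_measure)"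
    by (simp add: nn_integral_indicator)
  also have "\<dots> = (\<integral>\<^sup>+t. indicator {p} (cis t) * indicator {0..<0+2*pi} t \<partial>lborel)"
    by (rule arc_integral) simp
  also have "\<dots> = (\<integral>\<^sup>+(t::real). 0 \<partial>lborel)"
  proof -
    have "AE t in lborel. indicator {p} (cis t) * indicator {0..<0+2*pi} t = (0::ennreal)"
      using AE by eventually_elim (auto simp: C_def indicator_def)
    then show ?thesis by (rule nn_integral_cong_AE)
  qed
  finally show ?thesis by simp
qed

lemma arc_countable_null: assumes "countable X" shows "X \<in> null_sets arc_measure"
proof -
  have s: "X \<in> sets arc_measure"
    by (rule sets.countable[OF _ assms]) simp
  have "emeasure arc_measure X = (\<integral>\<^sup>+x. emeasure arc_measure {x} \<partial>count_space X)"
    by (rule emeasure_countable_singleton[OF _ assms]) simp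
  also have "\<dots> = 0" by (simp add: arc_singleton_null)
  finally show ?thesis using s by (simp add: null_sets_def)
qed

lemma nu_sets[simp]: "sets nu = sets (arc_measure \<Otimes>\<^sub>M arc_measure)"
  unfolding nu_def by simp

lemma null_nu: assumes "Z \<in> null_sets (arc_measure \<Otimes>\<^sub>M arc_measure)" shows "Z \<in> null_sets nu"
proof -
  have "AE x in arc_measure \<Otimes>\<^sub>M arc_measure. x \<notin> Z" by (rule AE_not_in[OF assms])
  then show ?thesis unfolding nu_def
    by (subst null_sets_density_iff) (use assms in \<open>auto elim!: AE_mp\<close>)
qed

lemma sum_tele_int: assumes "(n::int) \<ge> 0" shows "(\<Sum>i\<in>{1..n}. f i - f (i+1)) = f 1 - (f (n+1) :: real)"
proof -
  obtain m where m: "n = int m" using assms by (metis nonneg_eq_int)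
  have "(\<Sum>i\<in>{1..int m}. f i - f (i+1)) = f 1 - f (int m+1)"
  proof (induction m)
    case 0 then show ?case by simp
  next
    case (Suc m)
    have "{1..int (Suc m)} = insert (1 + int m) {1..int m}"
      using atLeastAtMostPlus1_int_conv[of 1 "int m"] by simp
    then show ?case using Suc by (simp add: algebra_simps)
  qed
  then show ?thesis using m by simp
qed

context PS begin

lemma Z_null: "Z \<in> null_sets nu"
proof -
  have c1: "countable (range (Pp g) \<union> range (Qp g))" by simp
  have c2: "countable (range A)" by simp
  have "(range (Pp g) \<union> range (Qp g)) \<times> UNIV \<in> null_sets (arc_measure \<Otimes>\<^sub>M arc_measure)"
    by (rule arc.times_in_null_sets1[OF arc_countable_null[OF c1]]) simp
  moreover have "UNIV \<times> range A \<in> null_sets (arc_measure \<Otimes>\<^sub>M arc_measure)"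
    by (rule arc.times_in_null_sets2[OF _ arc_countable_null[OF c2]]) simp
  ultimately show ?thesis unfolding Z_def by (intro null_nu) auto
qed

definition L :: "int \<Rightarrow> nat \<Rightarrow> real" where "L i k = Lr (X1 i k) (X2 i k) (Y1 i k) (Y2 i k)"

lemma R_sets: "R i k \<in> sets nu"
  unfolding R_def nu_sets by (intro pair_measureI) simp_all

lemma emeasure_Omega: "emeasure nu (Omega g A) = ennreal (\<Sum>(i,k)\<in>{1..NN g} \<times> {1,2,3}. L i k)"
proof -
  let ?K = "{1..NN g} \<times> {1,2,3::nat}"
  have fin: "finite ?K" by simp
  have U: "(\<Union>(i,k)\<in>?K. R i k) \<in> sets nu"
    using R_sets by (intro sets.finite_UN fin) auto
  have "emeasure nu (Omega g A) = emeasure nu ((\<Union>(i,k)\<in>?K. R i k) - Z)"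
    unfolding Omega_eq by (rule emeasure_Diff_null_set[OF Z_null U, symmetric])
  also have "(\<Union>(i,k)\<in>?K. R i k) - Z = (\<Union>p\<in>?K. R (fst p) (snd p) - Z)"
    by (simp add: case_prod_beta' )
  also have "emeasure nu \<dots> = (\<Sum>p\<in>?K. emeasure nu (R (fst p) (snd p) - Z))"
  proof (rule sum_emeasure[symmetric])
    have Zs: "Z \<in> sets nu" using Z_null by (simp add: null_sets_def)
    show "(\<lambda>p. R (fst p) (snd p) - Z) ` ?K \<subseteq> sets nu"
    proof (rule image_subsetI)
      fix p show "R (fst p) (snd p) - Z \<in> sets nu" using R_sets Zs by (rule sets.Diff)
    qed
    show "disjoint_family_on (\<lambda>p. R (fst p) (snd p) - Z) ?K"
      unfolding disjoint_family_on_def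
    proof (intro ballI impI)
      fix p q assume "p \<in> ?K" "q \<in> ?K" "p \<noteq> q"
      then show "(R (fst p) (snd p) - Z) \<inter> (R (fst q) (snd q) - Z) = {}"
        using disj[of "fst p" "snd p" "fst q" "snd q"] by simp
    qed
  qed (rule fin)
  also have "\<dots> = (\<Sum>p\<in>?K. ennreal (L (fst p) (snd p)))"
  proof (rule sum.cong[OF refl])
    fix p assume p: "p \<in> ?K"
    have "emeasure nu (R (fst p) (snd p) - Z) = emeasure nu (R (fst p) (snd p))"
      by (rule emeasure_Diff_null_set[OF Z_null R_sets])
    also have "\<dots> = ennreal (L (fst p) (snd p))"
      unfolding L_def using p by (intro R_measure) auto
    finally show "emeasure nu (R (fst p) (snd p) - Z) = ennreal (L (fst p) (snd p))" .
  qed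
  also have "\<dots> = ennreal (\<Sum>p\<in>?K. L (fst p) (snd p))"
    by (rule sum_ennreal) (auto simp: L_def intro: R_measure(2))
  also have "(\<Sum>p\<in>?K. L (fst p) (snd p)) = (\<Sum>(i,k)\<in>?K. L i k)"
    by (simp add: case_prod_beta)
  finally show ?thesis .
qed

lemma L_nonneg: "0 \<le> (\<Sum>(i,k)\<in>{1..NN g} \<times> {1,2,3}. L i k)"
  by (intro sum_nonneg) (auto simp: L_def intro: R_measure(2))

definition lnT :: "int \<Rightarrow> real" where
  "lnT i = ln (sin ((qa g (i+2) - c i)/2)) + ln (sin ((pa g (i-1) + 2*pi - b i)/2))
         - ln (sin ((pa g i + 2*pi - b i)/2)) - ln (sin ((qa g (i+1) - c i)/2))"

definition phi :: "int \<Rightarrow> real" where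
  "phi i = ln (sin ((qa g (i+1) - a i)/2)) - ln (sin ((pa g (i-1) + 2*pi - a i)/2))"

lemma XY_vals: "X1 i 1 = qa g (i+2)" "X2 i 1 = pa g (i-1) + 2*pi" "Y1 i 1 = a i" "Y2 i 1 = a (i+1)"
  "X1 i 2 = qa g (i+1)" "X2 i 2 = qa g (i+2)" "Y1 i 2 = a i" "Y2 i 2 = c i"
  "X1 i 3 = pa g (i-1) + 2*pi" "X2 i 3 = pa g i + 2*pi" "Y1 i 3 = b i" "Y2 i 3 = a (i+1)"
  unfolding X1_def X2_def Y1_def Y2_def by simp_all

lemma L_sum_i: "L i 1 + L i 2 + L i 3 = lnT i + (phi i - phi (i+1))"
proof -
  have e: "i + 1 + 1 = i + 2" "i + 1 - 1 = i" by simp_all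
  show ?thesis
    unfolding L_def Lr_def XY_vals lnT_def phi_def e by linarith
qed

lemma phi_per: "phi (NN g + 1) = phi 1"
proof -
  have "qa g (NN g + 1 + 1) = qa g (1 + 1) + 2*pi" using qa_shiftN[of "1+1" 1] by (simp add: algebra_simps)
  moreover have "pa g (NN g + 1 - 1) = pa g (1 - 1) + 2*pi" using pa_shiftN[of "1-1" 1] by (simp add: algebra_simps)
  moreover have "a (NN g + 1) = a 1 + 2*pi" using a_shift[of 1 1] by (simp add: algebra_simps)
  ultimately show ?thesis unfolding phi_def by (simp add: algebra_simps)
qed

lemma sum_L: "(\<Sum>(i,k)\<in>{1..NN g} \<times> {1,2,3}. L i k) = (\<Sum>i\<in>{1..NN g}. lnT i)"
proof -
  have "(\<Sum>(i,k)\<in>{1..NN g} \<times> {1,2,3}. L i k) = (\<Sum>i\<in>{1..NN g}. \<Sum>k\<in>{1,2,3}. L i k)"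
    by (rule sum.cartesian_product[symmetric])
  also have "\<dots> = (\<Sum>i\<in>{1..NN g}. lnT i + (phi i - phi (i+1)))"
  proof (rule sum.cong[OF refl])
    fix i
    have "(\<Sum>k\<in>{1,2,3::nat}. L i k) = L i 1 + L i 2 + L i 3" by simp
    then show "(\<Sum>k\<in>{1,2,3::nat}. L i k) = lnT i + (phi i - phi (i+1))" using L_sum_i[of i] by linarith
  qed
  also have "\<dots> = (\<Sum>i\<in>{1..NN g}. lnT i) + (\<Sum>i\<in>{1..NN g}. phi i - phi (i+1))"
    by (rule sum.distrib)
  also have "(\<Sum>i\<in>{1..NN g}. phi i - phi (i+1)) = 0"
    using sum_tele_int[of "NN g" phi] Npos phi_per by simp
  finally show ?thesis by simp
qed

lemma pos4: "0 < sin ((qa g (i+2) - c i)/2)" "0 < sin ((pa g (i-1) + 2*pi - b i)/2)"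
    "0 < sin ((pa g i + 2*pi - b i)/2)" "0 < sin ((qa g (i+1) - c i)/2)"
  using sin_pos[of 2 "qa g (i+2)" i "c i"] sin_pos[of 3 "pa g (i-1) + 2*pi" i "b i"]
    sin_pos[of 3 "pa g i + 2*pi" i "b i"] sin_pos[of 2 "qa g (i+1)" i "c i"]
  by (simp_all add: X1_def X2_def Y1_def Y2_def)

lemma Tt_eq: "\<bar>sin ((Arg (Cpt g A i) - Arg (Qp g (i + 2))) / 2)\<bar> = sin ((qa g (i+2) - c i)/2)"
   "\<bar>sin ((Arg (Bpt g A i) - Arg (Pp g (i - 1))) / 2)\<bar> = sin ((pa g (i-1) + 2*pi - b i)/2)"
   "\<bar>sin ((Arg (Bpt g A i) - Arg (Pp g i)) / 2)\<bar> = sin ((pa g i + 2*pi - b i)/2)"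
   "\<bar>sin ((Arg (Cpt g A i) - Arg (Qp g (i + 1))) / 2)\<bar> = sin ((qa g (i+1) - c i)/2)"
proof -
  note p1 = pos4(1)[of i] and p2 = pos4(2)[of i] and p3 = pos4(3)[of i] and p4 = pos4(4)[of i]
  show "\<bar>sin ((Arg (Cpt g A i) - Arg (Qp g (i + 2))) / 2)\<bar> = sin ((qa g (i+2) - c i)/2)"
    using abs_sin_Arg[OF c_prop(3)[symmetric] Qp_cis[symmetric]] p1 by simp
  show "\<bar>sin ((Arg (Bpt g A i) - Arg (Pp g (i - 1))) / 2)\<bar> = sin ((pa g (i-1) + 2*pi - b i)/2)"
    using abs_sin_Arg[OF b_prop(3)[symmetric], of "pa g (i-1) + 2*pi" "Pp g (i-1)"] p2
    by (simp add: Pp_cis cis_2pi)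
  show "\<bar>sin ((Arg (Bpt g A i) - Arg (Pp g i)) / 2)\<bar> = sin ((pa g i + 2*pi - b i)/2)"
    using abs_sin_Arg[OF b_prop(3)[symmetric], of "pa g i + 2*pi" "Pp g i"] p3
    by (simp add: Pp_cis cis_2pi)
  show "\<bar>sin ((Arg (Cpt g A i) - Arg (Qp g (i + 1))) / 2)\<bar> = sin ((qa g (i+1) - c i)/2)"
    using abs_sin_Arg[OF c_prop(3)[symmetric] Qp_cis[symmetric]] p4 by simp
qed

lemma main:
  shows "emeasure nu (Omega g A) < \<infinity> \<and>
    measure nu (Omega g A) =
      ln (\<Prod>i\<in>{1..NN g}.
        (\<bar>sin ((Arg (Cpt g A i) - Arg (Qp g (i + 2))) / 2)\<bar> *
         \<bar>sin ((Arg (Bpt g A i) - Arg (Pp g (i - 1))) / 2)\<bar>) /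
        (\<bar>sin ((Arg (Bpt g A i) - Arg (Pp g i)) / 2)\<bar> *
         \<bar>sin ((Arg (Cpt g A i) - Arg (Qp g (i + 1))) / 2)\<bar>))"
proof -
  define Tt where "Tt i = (\<bar>sin ((Arg (Cpt g A i) - Arg (Qp g (i + 2))) / 2)\<bar> *
         \<bar>sin ((Arg (Bpt g A i) - Arg (Pp g (i - 1))) / 2)\<bar>) /
        (\<bar>sin ((Arg (Bpt g A i) - Arg (Pp g i)) / 2)\<bar> *
         \<bar>sin ((Arg (Cpt g A i) - Arg (Qp g (i + 1))) / 2)\<bar>)" for i
  have lnTt: "ln (Tt i) = lnT i" and Ttpos: "Tt i > 0" for i
  proof -
    have e: "Tt i = (sin ((qa g (i+2) - c i)/2) * sin ((pa g (i-1) + 2*pi - b i)/2)) /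
         (sin ((pa g i + 2*pi - b i)/2) * sin ((qa g (i+1) - c i)/2))"
      unfolding Tt_def Tt_eq ..
    note p = pos4[of i]
    show "Tt i > 0" unfolding e using p by simp
    show "ln (Tt i) = lnT i" unfolding e lnT_def using p by (simp add: ln_mult ln_div)
  qed
  have "ln (\<Prod>i\<in>{1..NN g}. Tt i) = (\<Sum>i\<in>{1..NN g}. ln (Tt i))"
    by (rule ln_prod) (use Ttpos in \<open>auto simp: less_le\<close>)
  also have "\<dots> = (\<Sum>(i,k)\<in>{1..NN g} \<times> {1,2,3}. L i k)" using lnTt sum_L by simp
  finally have lnP: "ln (\<Prod>i\<in>{1..NN g}. Tt i) = (\<Sum>(i,k)\<in>{1..NN g} \<times> {1,2,3}. L i k)" .
  have "measure nu (Omega g A) = (\<Sum>(i,k)\<in>{1..NN g} \<times> {1,2,3}. L i k)"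
    unfolding measure_def emeasure_Omega using L_nonneg by simp
  then show ?thesis unfolding emeasure_Omega lnP[symmetric] Tt_def by simp
qed

end

theorem proposition7p1:
  fixes g :: nat and A :: "int \<Rightarrow> complex"
  assumes "g \<ge> 2"
    and "\<forall>i. A (i + NN g) = A i"
    and "\<forall>i. A i \<in> open_arc (Pp g i) (Qp g i)"
    and "\<forall>i. T g i (A i) \<in> open_arc (Qp g (rho g i)) (A (rho g i + 1))"
    and "\<forall>i. T g (i - 1) (A i) \<in> open_arc (A (theta g (i - 1))) (Pp g (theta g (i - 1) + 1))"
  shows "emeasure nu (Omega g A) < \<infinity> \<and>
    measure nu (Omega g A) =
      ln (\<Prod>i\<in>{1..NN g}.
        (\<bar>sin ((Arg (Cpt g A i) - Arg (Qp g (i + 2))) / 2)\<bar> *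
         \<bar>sin ((Arg (Bpt g A i) - Arg (Pp g (i - 1))) / 2)\<bar>) /
        (\<bar>sin ((Arg (Bpt g A i) - Arg (Pp g i)) / 2)\<bar> *
         \<bar>sin ((Arg (Cpt g A i) - Arg (Qp g (i + 1))) / 2)\<bar>))"
proof -
  interpret PS g A by unfold_locales (fact assms)+
  show ?thesis by (rule main)
qed

end
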